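(* Fix an integer $k\ge 2$ and constants $\alpha>0$, $0<p<1$, and let $\tau=\frac1{1-p}$, $r_{cr}=\frac{1}{\ln\tau}$. Suppose $k<\frac{\tau\ln\tau}{\tau-1}$. Then there exists $r_0<r_{cr}$ such that for every $r\in(r_0,r_{cr})$, the number $X$ of solutions of a random instance of Model RB with parameters $(n,\alpha,r,k,p)$ satisfies $\mathbb{E}[X]^2/\mathbb{E}[X^2]=o(1)$ as $n\to\infty$.
   Context: Model RB with parameters $(n,\alpha,r,k,p)$, where $n$ is the number of variables, $\alpha>0$, $r>0$, $k\ge 2$ an integer and $0<p<1$: there are $n$ variables $x_1,\dots,x_n$, each with the same domain $D$ of size $d=n^{\alpha}$ (treated as an integer). A random instance is generated as follows: (1) select, independently with repetition, $t=rn\ln d$ constraints, the scope of each being a set of $k$ distinct variables chosen uniformly at random among the $n$ variables; (2) for each constraint, select uniformly at random without repetition a set of $q=p\,d^{k}$ "incompatible" tuples from $D^{k}$. An assignment to all variables is a solution if for every constraint the tuple of values of its scope is not incompatible. Limits are as $n\to\infty$ with $\alpha,r,k,p$ fixed. *)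

theory Defs
  imports "HOL-Probability.Probability"
begin

text \<open>Model RB.  Variables are 0..n-1, the domain is {0..<d}.
  Non-integer quantities are rounded down: d = floor(n powr alpha),
  t = floor(r n ln d), q = floor(p d^k).\<close>

definition rb_d :: "nat \<Rightarrow> real \<Rightarrow> nat" where
  "rb_d n \<alpha> = nat \<lfloor>real n powr \<alpha>\<rfloor>"

definition rb_t :: "nat \<Rightarrow> real \<Rightarrow> real \<Rightarrow> nat" where
  "rb_t n \<alpha> r = nat \<lfloor>r * real n * ln (real (rb_d n \<alpha>))\<rfloor>"

definition rb_q :: "nat \<Rightarrow> real \<Rightarrow> nat \<Rightarrow> real \<Rightarrow> nat" where
  "rb_q n \<alpha> k p = nat \<lfloor>p * real (rb_d n \<alpha>) ^ k\<rfloor>"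

definition rb_tuples :: "nat \<Rightarrow> nat \<Rightarrow> nat list set" where
  "rb_tuples d k = {xs. length xs = k \<and> set xs \<subseteq> {..<d}}"

text \<open>Scopes: k distinct variables (as an ordered list; choosing a uniformly random
  ordered k-tuple of distinct variables is the same as a uniform k-set together with
  an ordering used to read the tuples).\<close>
definition rb_scopes :: "nat \<Rightarrow> nat \<Rightarrow> nat list set" where
  "rb_scopes n k = {xs. distinct xs \<and> length xs = k \<and> set xs \<subseteq> {..<n}}"

text \<open>A constraint: a scope and a set of incompatible tuples.\<close>
type_synonym rb_constraint = "nat list \<times> nat list set"

definition rb_constraint_pmf :: "nat \<Rightarrow> real \<Rightarrow> nat \<Rightarrow> real \<Rightarrow> rb_constraint pmf" where
  "rb_constraint_pmf n \<alpha> k p =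
     pair_pmf (pmf_of_set (rb_scopes n k))
              (pmf_of_set {R. R \<subseteq> rb_tuples (rb_d n \<alpha>) k \<and> card R = rb_q n \<alpha> k p})"

definition rb_instance :: "nat \<Rightarrow> real \<Rightarrow> real \<Rightarrow> nat \<Rightarrow> real \<Rightarrow> (nat \<Rightarrow> rb_constraint) pmf" where
  "rb_instance n \<alpha> r k p =
     Pi_pmf {..<rb_t n \<alpha> r} ([], {}) (\<lambda>_. rb_constraint_pmf n \<alpha> k p)"

definition rb_solutions :: "nat \<Rightarrow> nat \<Rightarrow> nat \<Rightarrow> (nat \<Rightarrow> rb_constraint) \<Rightarrow> (nat \<Rightarrow> nat) set" where
  "rb_solutions n d t I =
     {\<sigma> \<in> {..<n} \<rightarrow>\<^sub>E {..<d}. \<forall>i<t. map \<sigma> (fst (I i)) \<notin> snd (I i)}"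

definition rb_X :: "nat \<Rightarrow> real \<Rightarrow> real \<Rightarrow> (nat \<Rightarrow> rb_constraint) \<Rightarrow> real" where
  "rb_X n \<alpha> r I = real (card (rb_solutions n (rb_d n \<alpha>) (rb_t n \<alpha> r) I))"

definition rb_EX :: "nat \<Rightarrow> real \<Rightarrow> real \<Rightarrow> nat \<Rightarrow> real \<Rightarrow> real" where
  "rb_EX n \<alpha> r k p = measure_pmf.expectation (rb_instance n \<alpha> r k p) (\<lambda>I. rb_X n \<alpha> r I)"

definition rb_EX2 :: "nat \<Rightarrow> real \<Rightarrow> real \<Rightarrow> nat \<Rightarrow> real \<Rightarrow> real" where
  "rb_EX2 n \<alpha> r k p = measure_pmf.expectation (rb_instance n \<alpha> r k p) (\<lambda>I. (rb_X n \<alpha> r I)^2)"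

end

theory Submission
  imports Defs
begin


lemma finite_tuples: "finite (rb_tuples d k)"
proof -
  have "rb_tuples d k = {xs. set xs \<subseteq> {..<d} \<and> length xs = k}" unfolding rb_tuples_def by auto
  thus ?thesis by (simp add: finite_lists_length_eq)
qed

lemma card_tuples: "card (rb_tuples d k) = d ^ k"
proof -
  have "rb_tuples d k = {xs. set xs \<subseteq> {..<d} \<and> length xs = k}" unfolding rb_tuples_def by auto
  thus ?thesis by (simp add: card_lists_length_eq)
qed

lemma finite_scopes: "finite (rb_scopes n k)"
proof -
  have "rb_scopes n k \<subseteq> {xs. set xs \<subseteq> {..<n} \<and> length xs = k}" unfolding rb_scopes_def by auto
  thus ?thesis by (rule finite_subset) (simp add: finite_lists_length_eq)
qed

lemma card_scopes_gen: "k \<le> card A \<Longrightarrow> finite A \<Longrightarrow>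
   card {xs. distinct xs \<and> length xs = k \<and> set xs \<subseteq> A} = \<Prod>{card A - k + 1 .. card A}"
proof -
  assume a: "k \<le> card A" "finite A"
  have "{xs. distinct xs \<and> length xs = k \<and> set xs \<subseteq> A} = {xs. length xs = k \<and> distinct xs \<and> set xs \<subseteq> A}" by auto
  thus ?thesis using card_lists_distinct_length_eq[OF a(2) a(1)] by simp
qed

definition Rs :: "nat \<Rightarrow> nat \<Rightarrow> nat \<Rightarrow> nat list set set" where
  "Rs d k q = {R. R \<subseteq> rb_tuples d k \<and> card R = q}"

lemma finite_Rs: "finite (Rs d k q)"
  unfolding Rs_def using finite_tuples by (auto intro: finite_subset[of _ "Pow (rb_tuples d k)"])

lemma card_Rs: "card (Rs d k q) = (d^k choose q)"
  unfolding Rs_def using n_subsets[OF finite_tuples] card_tuples by simp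

lemma Rs_ne: "q \<le> d^k \<Longrightarrow> Rs d k q \<noteq> {}"
proof
  assume "q \<le> d^k" "Rs d k q = {}"
  hence "(d^k choose q) = 0" using card_Rs[of d k q] by simp
  with \<open>q \<le> d^k\<close> show False by simp
qed

lemma prob1:
  assumes x: "x \<in> rb_tuples d k" and q: "q \<le> d^k"
  shows "measure_pmf.prob (pmf_of_set (Rs d k q)) {R. x \<notin> R} = real (d^k - 1 choose q) / real (d^k choose q)"
proof -
  have ne: "Rs d k q \<noteq> {}" using Rs_ne q .
  have "Rs d k q \<inter> {R. x \<notin> R} = {R. R \<subseteq> rb_tuples d k - {x} \<and> card R = q}"
    unfolding Rs_def by auto
  moreover have "card \<dots> = (d^k - 1 choose q)"
    using n_subsets[of "rb_tuples d k - {x}" q] finite_tuples card_tuples x by simp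
  ultimately show ?thesis using measure_pmf_of_set[OF ne finite_Rs] card_Rs by simp
qed

lemma prob2:
  assumes x: "x \<in> rb_tuples d k" and y: "y \<in> rb_tuples d k" and xy: "x \<noteq> y" and q: "q \<le> d^k"
  shows "measure_pmf.prob (pmf_of_set (Rs d k q)) {R. x \<notin> R \<and> y \<notin> R} = real (d^k - 2 choose q) / real (d^k choose q)"
proof -
  have ne: "Rs d k q \<noteq> {}" using Rs_ne q .
  have "Rs d k q \<inter> {R. x \<notin> R \<and> y \<notin> R} = {R. R \<subseteq> rb_tuples d k - {x,y} \<and> card R = q}"
    unfolding Rs_def by auto
  moreover have "card \<dots> = (d^k - 2 choose q)"
    using n_subsets[of "rb_tuples d k - {x,y}" q] finite_tuples card_tuples x y xy by (simp add: numeral_2_eq_2)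
  ultimately show ?thesis using measure_pmf_of_set[OF ne finite_Rs] card_Rs by simp
qed

lemma pair_pmf_of_set:
  assumes "finite A" "A \<noteq> {}" "finite B" "B \<noteq> {}"
  shows "pair_pmf (pmf_of_set A) (pmf_of_set B) = pmf_of_set (A \<times> B)"
  by (rule pmf_eqI) (auto simp: pmf_pair assms card_cartesian_product indicator_def)



lemma prob_pair_uniform:
  assumes A: "finite A" "A \<noteq> {}" and B: "finite B" "B \<noteq> {}"
  shows "measure_pmf.prob (pair_pmf (pmf_of_set A) (pmf_of_set B)) E
     = (\<Sum>a\<in>A. measure_pmf.prob (pmf_of_set B) {b. (a,b) \<in> E}) / card A"
proof -
  have "(A \<times> B) \<inter> E = Sigma A (\<lambda>a. B \<inter> {b. (a,b) \<in> E})" by auto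
  hence c: "card ((A \<times> B) \<inter> E) = (\<Sum>a\<in>A. card (B \<inter> {b. (a,b) \<in> E}))"
    using A B by (simp add: card_SigmaI)
  have "measure_pmf.prob (pair_pmf (pmf_of_set A) (pmf_of_set B)) E = card ((A \<times> B) \<inter> E) / (card A * card B)"
    using A B by (simp add: pair_pmf_of_set measure_pmf_of_set card_cartesian_product)
  also have "\<dots> = (\<Sum>a\<in>A. card (B \<inter> {b. (a,b) \<in> E}) / card B) / card A"
    by (simp add: c sum_divide_distrib[symmetric])
  also have "\<dots> = (\<Sum>a\<in>A. measure_pmf.prob (pmf_of_set B) {b. (a,b) \<in> E}) / card A"
    using B by (simp add: measure_pmf_of_set)
  finally show ?thesis .
qed

lemma scopes_ne: "k \<le> n \<Longrightarrow> rb_scopes n k \<noteq> {}"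
  unfolding rb_scopes_def by (rule ccontr) (auto dest!: spec[of _ "[0..<k]"])

definition Cp :: "nat \<Rightarrow> nat \<Rightarrow> nat \<Rightarrow> nat \<Rightarrow> rb_constraint pmf" where
  "Cp n d k q = pair_pmf (pmf_of_set (rb_scopes n k)) (pmf_of_set (Rs d k q))"

definition P1 :: "nat \<Rightarrow> nat \<Rightarrow> real" where
  "P1 D q = real (D - 1 choose q) / real (D choose q)"
definition Q2 :: "nat \<Rightarrow> nat \<Rightarrow> real" where
  "Q2 D q = real (D - 2 choose q) / real (D choose q)"

lemma Q2_le_P1: "Q2 D q \<le> P1 D q"
  unfolding Q2_def P1_def by (intro divide_right_mono) (auto intro: binomial_right_mono)

lemma map_in_tuples: "\<sigma> \<in> {..<n} \<rightarrow>\<^sub>E {..<d} \<Longrightarrow> xs \<in> rb_scopes n k \<Longrightarrow> map \<sigma> xs \<in> rb_tuples d k"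
  unfolding rb_scopes_def rb_tuples_def by (auto simp: PiE_def Pi_def)

lemma probC_single:
  assumes \<sigma>: "\<sigma> \<in> {..<n} \<rightarrow>\<^sub>E {..<d}" and kn: "k \<le> n" and q: "q \<le> d^k"
  shows "measure_pmf.prob (Cp n d k q) {c. map \<sigma> (fst c) \<notin> snd c} = P1 (d^k) q"
proof -
  have "measure_pmf.prob (Cp n d k q) {c. map \<sigma> (fst c) \<notin> snd c}
     = (\<Sum>a\<in>rb_scopes n k. measure_pmf.prob (pmf_of_set (Rs d k q)) {b. map \<sigma> a \<notin> b}) / card (rb_scopes n k)"
    unfolding Cp_def by (subst prob_pair_uniform) (auto simp: finite_scopes scopes_ne kn finite_Rs Rs_ne q)
  also have "\<dots> = (\<Sum>a\<in>rb_scopes n k. P1 (d^k) q) / card (rb_scopes n k)"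
    by (intro arg_cong2[where f="(/)"] sum.cong refl) (simp add: prob1 map_in_tuples[OF \<sigma>] q P1_def)
  also have "\<dots> = P1 (d^k) q" using finite_scopes scopes_ne[OF kn] by simp
  finally show ?thesis .
qed

lemma scopes_sub: "m \<le> n \<Longrightarrow> {xs \<in> rb_scopes n k. set xs \<subseteq> {..<m}} = rb_scopes m k"
  unfolding rb_scopes_def by auto

lemma scopes_mono: "m \<le> n \<Longrightarrow> rb_scopes m k \<subseteq> rb_scopes n k"
  unfolding rb_scopes_def by auto

lemma probC_pair:
  assumes \<sigma>: "\<sigma> \<in> {..<n} \<rightarrow>\<^sub>E {..<d}" and \<sigma>': "\<sigma>' \<in> {..<n} \<rightarrow>\<^sub>E {..<d}"
    and agree: "\<forall>i<m. \<sigma> i = \<sigma>' i" and km: "k \<le> m" and mn: "m \<le> n" and q: "q \<le> d^k"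
  shows "measure_pmf.prob (Cp n d k q) {c. map \<sigma> (fst c) \<notin> snd c \<and> map \<sigma>' (fst c) \<notin> snd c}
     \<ge> (card (rb_scopes m k) / card (rb_scopes n k)) * P1 (d^k) q
        + (1 - card (rb_scopes m k) / card (rb_scopes n k)) * Q2 (d^k) q"
proof -
  let ?Sc = "rb_scopes n k" and ?Sm = "rb_scopes m k"
  have kn: "k \<le> n" using km mn by simp
  have fin: "finite ?Sc" and ne: "?Sc \<noteq> {}" using finite_scopes scopes_ne[OF kn] by auto
  have cpos: "card ?Sc > 0" using fin ne by (simp add: card_gt_0_iff)
  define g where "g xs = (if set xs \<subseteq> {..<m} then P1 (d^k) q else Q2 (d^k) q)" for xs :: "nat list"
  have "measure_pmf.prob (Cp n d k q) {c. map \<sigma> (fst c) \<notin> snd c \<and> map \<sigma>' (fst c) \<notin> snd c}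
     = (\<Sum>a\<in>?Sc. measure_pmf.prob (pmf_of_set (Rs d k q)) {b. map \<sigma> a \<notin> b \<and> map \<sigma>' a \<notin> b}) / card ?Sc"
    unfolding Cp_def by (subst prob_pair_uniform) (auto simp: finite_scopes scopes_ne kn finite_Rs Rs_ne q)
  also have "\<dots> \<ge> (\<Sum>a\<in>?Sc. g a) / card ?Sc"
  proof (intro divide_right_mono sum_mono)
    fix a assume a: "a \<in> ?Sc"
    have t1: "map \<sigma> a \<in> rb_tuples d k" and t2: "map \<sigma>' a \<in> rb_tuples d k"
      using map_in_tuples \<sigma> \<sigma>' a by auto
    show "g a \<le> measure_pmf.prob (pmf_of_set (Rs d k q)) {b. map \<sigma> a \<notin> b \<and> map \<sigma>' a \<notin> b}"
    proof (cases "map \<sigma> a = map \<sigma>' a")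
      case True
      hence "{b. map \<sigma> a \<notin> b \<and> map \<sigma>' a \<notin> b} = {R. map \<sigma> a \<notin> R}" by (simp only: True) simp
      hence "measure_pmf.prob (pmf_of_set (Rs d k q)) {b. map \<sigma> a \<notin> b \<and> map \<sigma>' a \<notin> b} = P1 (d^k) q"
        using prob1[OF t1 q] by (simp add: P1_def)
      thus ?thesis using Q2_le_P1 unfolding g_def by auto
    next
      case False
      hence "\<not> set a \<subseteq> {..<m}" using agree by (auto simp: map_eq_conv subset_iff)
      moreover have "measure_pmf.prob (pmf_of_set (Rs d k q)) {b. map \<sigma> a \<notin> b \<and> map \<sigma>' a \<notin> b} = Q2 (d^k) q"
        using prob2[OF t1 t2 False q] by (simp add: Q2_def)
      ultimately show ?thesis unfolding g_def by simp
    qed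
  qed simp
  also have "(\<Sum>a\<in>?Sc. g a) = card ?Sm * P1 (d^k) q + (card ?Sc - card ?Sm) * Q2 (d^k) q"
  proof -
    have "(\<Sum>a\<in>?Sc. g a) = card {a\<in>?Sc. set a \<subseteq> {..<m}} * P1 (d^k) q + card {a\<in>?Sc. \<not> set a \<subseteq> {..<m}} * Q2 (d^k) q"
      unfolding g_def using fin by (simp add: sum.If_cases Collect_conj_eq Int_commute Collect_neg_eq)
    moreover have "card {a\<in>?Sc. \<not> set a \<subseteq> {..<m}} = card ?Sc - card ?Sm"
    proof -
      have "{a\<in>?Sc. \<not> set a \<subseteq> {..<m}} = ?Sc - {a\<in>?Sc. set a \<subseteq> {..<m}}" by auto
      thus ?thesis using fin scopes_mono[OF mn] by (simp add: card_Diff_subset scopes_sub[OF mn] finite_scopes)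
    qed
    ultimately show ?thesis by (simp add: scopes_sub[OF mn])
  qed
  also have "(card ?Sm * P1 (d^k) q + (card ?Sc - card ?Sm) * Q2 (d^k) q) / card ?Sc
      = (card ?Sm / card ?Sc) * P1 (d^k) q + (1 - card ?Sm / card ?Sc) * Q2 (d^k) q"
  proof -
    have "card ?Sm \<le> card ?Sc" using fin scopes_sub[OF mn] by (metis (no_types, lifting) card_mono mem_Collect_eq subsetI)
    thus ?thesis using cpos by (simp add: of_nat_diff field_simps)
  qed
  finally show ?thesis .
qed



definition Inst :: "nat \<Rightarrow> nat \<Rightarrow> nat \<Rightarrow> nat \<Rightarrow> nat \<Rightarrow> (nat \<Rightarrow> rb_constraint) pmf" where
  "Inst n d k q t = Pi_pmf {..<t} ([], {}) (\<lambda>_. Cp n d k q)"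

lemma integrable_ind: "integrable (measure_pmf M) (indicator A :: _ \<Rightarrow> real)"
  by (rule integrable_real_indicator) (simp_all add: less_top[symmetric])

lemma prob_all:
  "measure_pmf.prob (Inst n d k q t) {I. \<forall>i<t. I i \<in> E} = measure_pmf.prob (Cp n d k q) E ^ t"
proof -
  have "{I. \<forall>i<t. I i \<in> E} = Pi {..<t} (\<lambda>_. E)" by (auto simp: Pi_def)
  thus ?thesis unfolding Inst_def by (simp add: measure_Pi_pmf_Pi)
qed

lemma sol_sub: "rb_solutions n d t I \<subseteq> {..<n} \<rightarrow>\<^sub>E {..<d}"
  unfolding rb_solutions_def by auto

lemma card_sol_sum: "real (card (rb_solutions n d t I))
   = (\<Sum>\<sigma>\<in>{..<n} \<rightarrow>\<^sub>E {..<d}. indicator {I. \<forall>i<t. I i \<in> {c. map \<sigma> (fst c) \<notin> snd c}} I)"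
proof -
  let ?F = "{..<n} \<rightarrow>\<^sub>E ({..<d}::nat set)"
  have fin: "finite ?F" by (simp add: finite_PiE)
  have "(\<Sum>\<sigma>\<in>?F. indicator {I. \<forall>i<t. I i \<in> {c. map \<sigma> (fst c) \<notin> snd c}} I :: real)
      = (\<Sum>\<sigma>\<in>?F. if \<sigma> \<in> rb_solutions n d t I then 1 else 0)"
    by (intro sum.cong refl) (auto simp: indicator_def rb_solutions_def)
  also have "\<dots> = real (card (?F \<inter> rb_solutions n d t I))"
    using fin by (simp add: sum.If_cases)
  also have "?F \<inter> rb_solutions n d t I = rb_solutions n d t I" using sol_sub by blast
  finally show ?thesis by simp
qed

lemma EX_eq:
  assumes kn: "k \<le> n" and q: "q \<le> d^k"
  shows "measure_pmf.expectation (Inst n d k q t) (\<lambda>I. real (card (rb_solutions n d t I)))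
     = real d ^ n * P1 (d^k) q ^ t"
proof -
  let ?F = "{..<n} \<rightarrow>\<^sub>E ({..<d}::nat set)"
  have "measure_pmf.expectation (Inst n d k q t) (\<lambda>I. real (card (rb_solutions n d t I)))
     = (\<Sum>\<sigma>\<in>?F. measure_pmf.expectation (Inst n d k q t) (indicator {I. \<forall>i<t. I i \<in> {c. map \<sigma> (fst c) \<notin> snd c}}))"
    unfolding card_sol_sum by (rule Bochner_Integration.integral_sum[OF integrable_ind])
  also have "\<dots> = (\<Sum>\<sigma>\<in>?F. P1 (d^k) q ^ t)"
    by (intro sum.cong refl) (simp only: Bochner_Integration.integral_indicator space_measure_pmf Int_UNIV_right prob_all probC_single kn q)
  also have "\<dots> = real d ^ n * P1 (d^k) q ^ t" by (simp add: card_PiE)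
  finally show ?thesis .
qed

lemma card_sol_sq: "real (card (rb_solutions n d t I))^2
   = (\<Sum>s\<in>({..<n} \<rightarrow>\<^sub>E {..<d}) \<times> ({..<n} \<rightarrow>\<^sub>E {..<d}).
        indicator {I. \<forall>i<t. I i \<in> {c. map (fst s) (fst c) \<notin> snd c \<and> map (snd s) (fst c) \<notin> snd c}} I)"
proof -
  let ?F = "{..<n} \<rightarrow>\<^sub>E ({..<d}::nat set)"
  let ?S = "rb_solutions n d t I"
  have fin: "finite (?F \<times> ?F)" by (simp add: finite_PiE)
  have "(\<Sum>s\<in>?F \<times> ?F. indicator {I. \<forall>i<t. I i \<in> {c. map (fst s) (fst c) \<notin> snd c \<and> map (snd s) (fst c) \<notin> snd c}} I :: real)
      = (\<Sum>s\<in>?F \<times> ?F. if s \<in> ?S \<times> ?S then 1 else 0)"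
    by (intro sum.cong refl) (auto simp: indicator_def rb_solutions_def)
  also have "\<dots> = real (card ((?F \<times> ?F) \<inter> (?S \<times> ?S)))"
    using fin by (simp add: sum.If_cases)
  also have "(?F \<times> ?F) \<inter> (?S \<times> ?S) = ?S \<times> ?S" using sol_sub by blast
  finally show ?thesis by (simp add: card_cartesian_product power2_eq_square)
qed

definition comb :: "nat \<Rightarrow> (nat \<Rightarrow> nat) \<Rightarrow> (nat \<Rightarrow> nat) \<Rightarrow> (nat \<Rightarrow> nat)" where
  "comb m \<sigma> \<rho> = (\<lambda>i. if i < m then \<sigma> i else \<rho> i)"

lemma EX2_ge:
  assumes km: "k \<le> m" and mn: "m \<le> n" and q: "q \<le> d^k"
  defines "a \<equiv> card (rb_scopes m k) / card (rb_scopes n k)"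
  shows "measure_pmf.expectation (Inst n d k q t) (\<lambda>I. real (card (rb_solutions n d t I))^2)
     \<ge> real d ^ n * real d ^ (n - m) * (a * P1 (d^k) q + (1 - a) * Q2 (d^k) q) ^ t"
proof -
  let ?F = "{..<n} \<rightarrow>\<^sub>E ({..<d}::nat set)"
  let ?F' = "{m..<n} \<rightarrow>\<^sub>E ({..<d}::nat set)"
  let ?PL = "a * P1 (d^k) q + (1 - a) * Q2 (d^k) q"
  let ?h = "\<lambda>s. measure_pmf.prob (Inst n d k q t) {I. \<forall>i<t. I i \<in> {c. map (fst s) (fst c) \<notin> snd c \<and> map (snd s) (fst c) \<notin> snd c}}"
  define G where "G = (\<lambda>(\<sigma>,\<rho>). (\<sigma>, comb m \<sigma> \<rho>)) ` (?F \<times> ?F')"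
  have GF: "G \<subseteq> ?F \<times> ?F"
    unfolding G_def comb_def using mn by (auto simp: PiE_def Pi_def extensional_def)
  have inj: "inj_on (\<lambda>(\<sigma>,\<rho>). (\<sigma>, comb m \<sigma> \<rho>)) (?F \<times> ?F')"
  proof (rule inj_onI, clarsimp)
    fix \<sigma> \<rho> \<rho>' assume r: "\<rho> \<in> ?F'" "\<rho>' \<in> ?F'" and e: "comb m \<sigma> \<rho> = comb m \<sigma> \<rho>'"
    show "\<rho> = \<rho>'"
    proof
      fix i show "\<rho> i = \<rho>' i"
      proof (cases "i < m")
        case True thus ?thesis using r by (auto simp: PiE_def extensional_def)
      next
        case False thus ?thesis using fun_cong[OF e, of i] by (simp add: comb_def)
      qed
    qed
  qed
  have cardG: "card G = d ^ n * d ^ (n - m)"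
    unfolding G_def using inj by (simp add: card_image card_cartesian_product card_PiE)
  have a01: "a \<le> 1" "0 \<le> a"
  proof -
    have "card (rb_scopes m k) \<le> card (rb_scopes n k)" by (rule card_mono[OF finite_scopes scopes_mono[OF mn]])
    thus "a \<le> 1" "0 \<le> a" unfolding a_def by (auto simp: divide_le_eq_1)
  qed
  have PL0: "0 \<le> ?PL" using a01 by (auto simp: P1_def Q2_def intro!: add_nonneg_nonneg mult_nonneg_nonneg)
  have "measure_pmf.expectation (Inst n d k q t) (\<lambda>I. real (card (rb_solutions n d t I))^2)
     = (\<Sum>s\<in>?F \<times> ?F. ?h s)"
    unfolding card_sol_sq by (subst Bochner_Integration.integral_sum[OF integrable_ind])
       (simp only: Bochner_Integration.integral_indicator space_measure_pmf Int_UNIV_right)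
  also have "\<dots> \<ge> (\<Sum>s\<in>G. ?h s)"
    by (rule sum_mono2[OF _ GF]) (auto simp: finite_PiE)
  also have "(\<Sum>s\<in>G. ?h s) \<ge> (\<Sum>s\<in>G. ?PL ^ t)"
  proof (rule sum_mono)
    fix s assume s: "s \<in> G"
    then obtain \<sigma> \<rho> where s': "s = (\<sigma>, comb m \<sigma> \<rho>)" "\<sigma> \<in> ?F" unfolding G_def by auto
    have sF2: "s \<in> ?F \<times> ?F" using s GF by blast
    have sF: "fst s \<in> ?F" "snd s \<in> ?F" using sF2 by (simp_all only: mem_Times_iff)
    have ag: "\<forall>i<m. fst s i = snd s i" using s' by (simp add: comb_def)
    have "?PL \<le> measure_pmf.prob (Cp n d k q) {c. map (fst s) (fst c) \<notin> snd c \<and> map (snd s) (fst c) \<notin> snd c}"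
      using probC_pair[OF sF ag km mn q] by (simp only: a_def)
    hence "?PL ^ t \<le> measure_pmf.prob (Cp n d k q) {c. map (fst s) (fst c) \<notin> snd c \<and> map (snd s) (fst c) \<notin> snd c} ^ t"
      by (rule power_mono[OF _ PL0])
    thus "?PL ^ t \<le> ?h s" by (simp only: prob_all)
  qed
  also have "(\<Sum>s\<in>G. ?PL ^ t) = real d ^ n * real d ^ (n - m) * ?PL ^ t"
    by (simp add: cardG)
  finally show ?thesis .
qed



lemma P1_closed: assumes "q \<le> D" "0 < D" shows "P1 D q = (real D - real q) / real D"
proof -
  have "(D - q) * (D choose q) = D * ((D - 1) choose q)" by (rule binomial_absorb_comp)
  hence "real (D - q) * real (D choose q) = real D * real ((D - 1) choose q)" by (metis of_nat_mult)
  moreover have "real (D choose q) > 0" using assms by simp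
  ultimately show ?thesis unfolding P1_def using assms by (simp add: of_nat_diff field_simps)
qed

lemma Q2_closed: assumes "q + 2 \<le> D"
  shows "Q2 D q = (real D - real q) * (real D - real q - 1) / (real D * (real D - 1))"
proof -
  have e1: "real (D - q) * real (D choose q) = real D * real ((D - 1) choose q)"
    by (metis binomial_absorb_comp of_nat_mult)
  have e2: "real (D - 1 - q) * real ((D - 1) choose q) = real (D - 1) * real ((D - 1 - 1) choose q)"
    by (metis binomial_absorb_comp of_nat_mult)
  have c0: "real (D choose q) > 0" using assms by simp
  have "D - 1 - 1 = D - 2" by simp
  hence e2': "real (D - 1 - q) * real ((D - 1) choose q) = real (D - 1) * real ((D - 2) choose q)"
    using e2 by simp
  have r1: "real (D - q) = real D - real q" "real (D - 1 - q) = real D - real q - 1" "real (D - 1) = real D - 1"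
    using assms by (simp_all add: of_nat_diff)
  have Dpos: "real D > 1" using assms by simp
  have "real ((D - 2) choose q) = real (D - 1 - q) * real ((D - 1) choose q) / real (D - 1)"
    using e2' Dpos r1 by (simp add: field_simps)
  also have "real ((D - 1) choose q) = real (D - q) * real (D choose q) / real D"
    using e1 Dpos by (simp add: field_simps)
  finally have "real ((D - 2) choose q) = (real D - real q - 1) * ((real D - real q) * real (D choose q) / real D) / (real D - 1)"
    using r1 by simp
  thus ?thesis unfolding Q2_def using c0 Dpos by (simp add: field_simps)
qed

lemma a_lower:
  assumes km: "k \<le> m" and mn: "m \<le> n" and n: "0 < n"
  shows "((real m - real k + 1) / real n) ^ k \<le> real (card (rb_scopes m k)) / real (card (rb_scopes n k))"
proof -
  have cm: "card (rb_scopes m k) = \<Prod>{m - k + 1 .. m}"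
    unfolding rb_scopes_def using card_scopes_gen[of k "{..<m}"] km by simp
  have cn: "card (rb_scopes n k) = \<Prod>{n - k + 1 .. n}"
    unfolding rb_scopes_def using card_scopes_gen[of k "{..<n}"] km mn by simp
  have ck1: "card {m - k + 1 .. m} = k" using km by simp
  have ck2: "card {n - k + 1 .. n} = k" using km mn by simp
  have "real (\<Prod>{m - k + 1 .. m}) = (\<Prod>i\<in>{m - k + 1 .. m}. real i)" by simp
  also have "\<dots> \<ge> (\<Prod>i\<in>{m - k + 1 .. m}. (real m - real k + 1))"
    by (rule prod_mono) (use km in auto)
  finally have lo: "real (\<Prod>{m - k + 1 .. m}) \<ge> (real m - real k + 1) ^ k" using ck1 by simp
  have "real (\<Prod>{n - k + 1 .. n}) = (\<Prod>i\<in>{n - k + 1 .. n}. real i)" by simp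
  also have "\<dots> \<le> (\<Prod>i\<in>{n - k + 1 .. n}. real n)"
    by (rule prod_mono) auto
  finally have hi: "real (\<Prod>{n - k + 1 .. n}) \<le> real n ^ k" using ck2 by simp
  have hp: "real (\<Prod>{n - k + 1 .. n}) > 0" using km mn n
    by (auto intro!: prod_pos)
  have "((real m - real k + 1) / real n) ^ k = (real m - real k + 1) ^ k / real n ^ k" by (simp add: power_divide)
  also have "\<dots> \<le> (real m - real k + 1) ^ k / real (\<Prod>{n - k + 1 .. n})"
    by (rule divide_left_mono[OF hi]) (use km hp n in auto)
  also have "\<dots> \<le> real (\<Prod>{m - k + 1 .. m}) / real (\<Prod>{n - k + 1 .. n})"
    by (rule divide_right_mono[OF lo]) (use hp in simp)
  finally show ?thesis using cm cn by simp
qed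

lemma ratio_le:
  assumes km: "k \<le> m" and mn: "m \<le> n" and q: "q \<le> d^k" and d: "0 < d"
    and aL: "aL \<le> real (card (rb_scopes m k)) / real (card (rb_scopes n k))"
    and PL: "PL = aL * P1 (d^k) q + (1 - aL) * Q2 (d^k) q" and PLpos: "0 < PL"
  shows "(measure_pmf.expectation (Inst n d k q t) (\<lambda>I. real (card (rb_solutions n d t I))))^2
          / measure_pmf.expectation (Inst n d k q t) (\<lambda>I. real (card (rb_solutions n d t I))^2)
         \<le> real d ^ m * (P1 (d^k) q ^ 2 / PL) ^ t"
proof -
  define a where "a = real (card (rb_scopes m k)) / real (card (rb_scopes n k))"
  define EX2 where "EX2 = measure_pmf.expectation (Inst n d k q t) (\<lambda>I. real (card (rb_solutions n d t I))^2)"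
  have ge: "EX2 \<ge> real d ^ n * real d ^ (n - m) * (a * P1 (d^k) q + (1 - a) * Q2 (d^k) q) ^ t"
    unfolding EX2_def a_def by (rule EX2_ge[OF km mn q])
  have "PL \<le> a * P1 (d^k) q + (1 - a) * Q2 (d^k) q"
  proof -
    have "(a - aL) * (P1 (d^k) q - Q2 (d^k) q) \<ge> 0"
      using aL Q2_le_P1[of "d^k" q] unfolding a_def by (intro mult_nonneg_nonneg) auto
    thus ?thesis unfolding PL by (simp add: algebra_simps)
  qed
  hence "PL ^ t \<le> (a * P1 (d^k) q + (1 - a) * Q2 (d^k) q) ^ t"
    using PLpos by (intro power_mono) auto
  hence ge2: "EX2 \<ge> real d ^ n * real d ^ (n - m) * PL ^ t"
    using ge d by (meson order_trans mult_left_mono zero_le_power of_nat_0_le_iff mult_nonneg_nonneg)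
  have pos: "real d ^ n * real d ^ (n - m) * PL ^ t > 0" using d PLpos by simp
  have "(real d ^ n * P1 (d^k) q ^ t)^2 / EX2 \<le> (real d ^ n * P1 (d^k) q ^ t)^2 / (real d ^ n * real d ^ (n - m) * PL ^ t)"
  proof (rule divide_left_mono[OF ge2])
    have "EX2 > 0" using pos ge2 by linarith
    thus "0 < EX2 * (real d ^ n * real d ^ (n - m) * PL ^ t)" using pos by simp
  qed simp
  also have "\<dots> = real d ^ m * (P1 (d^k) q ^ 2 / PL) ^ t"
  proof -
    have dn: "real d ^ n = real d ^ m * real d ^ (n - m)"
      using mn by (metis le_add_diff_inverse power_add)
    show ?thesis using d PLpos unfolding dn
      by (simp add: power_mult_distrib power_divide field_simps power2_eq_square flip: power_mult)
  qed
  finally show ?thesis unfolding EX2_def using EX_eq[OF _ q] km mn by simp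
qed



lemma powr_lim: assumes "0 < \<alpha>" shows "filterlim (\<lambda>n::nat. real n powr \<alpha>) at_top sequentially"
proof -
  have l: "filterlim (\<lambda>n::nat. ln (real n)) at_top sequentially"
    by (rule filterlim_compose[OF ln_at_top filterlim_real_sequentially])
  have "filterlim (\<lambda>n::nat. \<alpha> * ln (real n)) at_top sequentially"
    by (rule filterlim_tendsto_pos_mult_at_top[OF tendsto_const assms l])
  hence e: "filterlim (\<lambda>n::nat. exp (\<alpha> * ln (real n))) at_top sequentially"
    by (rule filterlim_compose[OF exp_at_top])
  show ?thesis
  proof (rule filterlim_at_top_mono[OF e])
    show "\<forall>\<^sub>F n in sequentially. exp (\<alpha> * ln (real n)) \<le> real n powr \<alpha>"
      using eventually_gt_at_top[of "0::nat"] by eventually_elim (simp add: powr_def)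
  qed
qed

lemma d_lim: assumes "0 < \<alpha>" shows "filterlim (\<lambda>n. real (rb_d n \<alpha>)) at_top sequentially"
proof -
  have "filterlim (\<lambda>n::nat. -1 + real n powr \<alpha>) at_top sequentially"
    by (rule filterlim_tendsto_add_at_top[OF tendsto_const powr_lim[OF assms]])
  thus ?thesis
  proof (rule filterlim_at_top_mono)
    show "\<forall>\<^sub>F n in sequentially. -1 + real n powr \<alpha> \<le> real (rb_d n \<alpha>)"
    proof (rule always_eventually, rule allI)
      fix n :: nat
      have "real n powr \<alpha> \<ge> 0" by simp
      thus "-1 + real n powr \<alpha> \<le> real (rb_d n \<alpha>)" unfolding rb_d_def by linarith
    qed
  qed
qed

lemma eps_exists:
  fixes \<tau> :: real and k :: nat
  assumes k: "k \<ge> 2" and \<tau>: "\<tau> > 1" and h: "real k * (\<tau> - 1) < \<tau> * ln \<tau>"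
  shows "\<exists>\<epsilon>. 0 < \<epsilon> \<and> \<epsilon> < 1 \<and> (1 - \<epsilon>) * ln \<tau> < ln (1 + (\<tau> - 1) * (1 - \<epsilon>) ^ k)"
proof -
  define f where "f x = ln (1 + (\<tau> - 1) * (1 - x) ^ k) - (1 - x) * ln \<tau>" for x :: real
  have der: "(f has_real_derivative (ln \<tau> - real k * (\<tau> - 1) / \<tau>)) (at 0)"
  proof -
    have "((\<lambda>x. ln (1 + (\<tau> - 1) * (1 - x) ^ k) - (1 - x) * ln \<tau>) has_real_derivative
          ((\<tau> - 1) * (real k * (1 - 0) ^ (k - 1) * (0 - 1))) / (1 + (\<tau> - 1) * (1 - 0) ^ k) - (0 - 1) * ln \<tau>) (at 0)"
      using \<tau> by (auto intro!: derivative_eq_intros)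
    thus ?thesis unfolding f_def by (rule DERIV_cong) (use \<tau> in \<open>simp add: field_simps\<close>)
  qed
  have pos: "ln \<tau> - real k * (\<tau> - 1) / \<tau> > 0" using h \<tau> by (simp add: field_simps)
  obtain \<delta> where \<delta>: "\<delta> > 0" "\<And>x. x > 0 \<Longrightarrow> x < \<delta> \<Longrightarrow> f 0 < f (0 + x)"
    using DERIV_pos_inc_right[OF der pos] by blast
  define \<epsilon> where "\<epsilon> = min (\<delta>/2) (1/2)"
  have e: "0 < \<epsilon>" "\<epsilon> < \<delta>" "\<epsilon> < 1" using \<delta> unfolding \<epsilon>_def by auto
  have "f 0 = 0" unfolding f_def using \<tau> by simp
  hence "0 < f \<epsilon>" using \<delta>(2)[OF e(1) e(2)] by simp
  thus ?thesis using e unfolding f_def by (intro exI[of _ \<epsilon>]) auto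
qed



lemma rb_EX_Inst: "rb_EX n \<alpha> r k p = measure_pmf.expectation (Inst n (rb_d n \<alpha>) k (rb_q n \<alpha> k p) (rb_t n \<alpha> r))
   (\<lambda>I. real (card (rb_solutions n (rb_d n \<alpha>) (rb_t n \<alpha> r) I)))"
  unfolding rb_EX_def rb_instance_def rb_constraint_pmf_def rb_X_def Inst_def Cp_def Rs_def ..

lemma rb_EX2_Inst: "rb_EX2 n \<alpha> r k p = measure_pmf.expectation (Inst n (rb_d n \<alpha>) k (rb_q n \<alpha> k p) (rb_t n \<alpha> r))
   (\<lambda>I. real (card (rb_solutions n (rb_d n \<alpha>) (rb_t n \<alpha> r) I))^2)"
  unfolding rb_EX2_def rb_instance_def rb_constraint_pmf_def rb_X_def Inst_def Cp_def Rs_def ..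

lemma per_n:
  fixes d D q t m n k :: nat and aL u e \<Phi> :: real
  assumes d2: "real d \<ge> 2" and D: "D = d ^ k" and qD: "q + 2 \<le> D"
    and km: "k \<le> m" and mn: "m \<le> n" and n0: "0 < n"
    and u: "u = real q / real D" and e: "e = inverse (real D)"
    and aL: "aL = ((real m - real k + 1) / real n) ^ k"
    and \<Phi>: "\<Phi> = aL / (1 - u) + (1 - aL) * ((1 - u - e) / ((1 - u) * (1 - e)))"
    and \<Phi>pos: "\<Phi> > 0"
  shows "(measure_pmf.expectation (Inst n d k q t) (\<lambda>I. real (card (rb_solutions n d t I))))^2
          / measure_pmf.expectation (Inst n d k q t) (\<lambda>I. real (card (rb_solutions n d t I))^2)
         \<le> exp (real m * ln (real d) - real t * ln \<Phi>)"
proof -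
  have Dr: "real D > 1" using qD by simp
  have dpos: "0 < d" using d2 by simp
  have qD': "q \<le> d ^ k" using qD D by simp
  have u1: "1 - u > 0" using Dr qD unfolding u by (simp add: field_simps)
  have e1: "1 - e > 0" using Dr unfolding e by (simp add: field_simps)
  have P1e: "P1 (d^k) q = 1 - u"
  proof -
    have "P1 D q = (real D - real q) / real D" using P1_closed[of q D] qD Dr by simp
    thus ?thesis using Dr dpos unfolding u D by (simp add: diff_divide_distrib)
  qed
  have Q2e: "Q2 (d^k) q = (1 - u) * (1 - u - e) / (1 - e)"
  proof -
    have "Q2 D q = (real D - real q) * (real D - real q - 1) / (real D * (real D - 1))" by (rule Q2_closed[OF qD])
    moreover have "(1 - u) * (1 - u - e) / (1 - e) = (real D - real q) * (real D - real q - 1) / (real D * (real D - 1))"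
      unfolding u e using Dr by (simp add: field_simps)
    ultimately show ?thesis using D by simp
  qed
  define PL where "PL = aL * P1 (d^k) q + (1 - aL) * Q2 (d^k) q"
  have PLe: "PL = \<Phi> * P1 (d^k) q ^ 2"
  proof -
    have x1: "aL / (1 - u) * (1 - u)^2 = aL * (1 - u)" using u1 by (simp add: power2_eq_square)
    have x2: "((1 - u - e) / ((1 - u) * (1 - e))) * (1 - u)^2 = (1 - u) * (1 - u - e) / (1 - e)"
      using u1 e1 by (simp add: power2_eq_square)
    have "\<Phi> * (1 - u)^2 = aL / (1 - u) * (1 - u)^2 + (1 - aL) * (((1 - u - e) / ((1 - u) * (1 - e))) * (1 - u)^2)"
      unfolding \<Phi> by (simp add: algebra_simps)
    also have "\<dots> = aL * (1 - u) + (1 - aL) * ((1 - u) * (1 - u - e) / (1 - e))" by (simp only: x1 x2)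
    finally show ?thesis unfolding PL_def P1e Q2e by simp
  qed
  have PLpos: "PL > 0" unfolding PLe using \<Phi>pos u1 P1e by simp
  have aLa: "aL \<le> real (card (rb_scopes m k)) / real (card (rb_scopes n k))"
    unfolding aL by (rule a_lower[OF km mn n0])
  have "(measure_pmf.expectation (Inst n d k q t) (\<lambda>I. real (card (rb_solutions n d t I))))^2
          / measure_pmf.expectation (Inst n d k q t) (\<lambda>I. real (card (rb_solutions n d t I))^2)
         \<le> real d ^ m * (P1 (d^k) q ^ 2 / PL) ^ t"
    by (rule ratio_le[OF km mn qD' dpos aLa PL_def PLpos])
  also have "P1 (d^k) q ^ 2 / PL = inverse \<Phi>"
    unfolding PLe using u1 P1e \<Phi>pos by (simp add: field_simps)
  also have "real d ^ m * inverse \<Phi> ^ t = exp (real m * ln (real d) - real t * ln \<Phi>)"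
  proof -
    have "exp (real m * ln (real d)) = real d ^ m"
      using dpos by (simp add: exp_of_nat_mult)
    moreover have "exp (- (real t * ln \<Phi>)) = inverse \<Phi> ^ t"
      using \<Phi>pos by (simp add: exp_minus exp_of_nat_mult power_inverse)
    ultimately show ?thesis by (simp add: exp_diff exp_minus field_simps)
  qed
  finally show ?thesis .
qed



lemma main_lim:
  fixes k :: nat and \<alpha> p \<epsilon> r :: real
  assumes k: "k \<ge> 1" and \<alpha>: "\<alpha> > 0" and p0: "0 < p" and p1: "p < 1"
    and e0: "0 < \<epsilon>" and e1: "\<epsilon> < 1" and r0: "r > 0"
    and rL: "r * ln (1 + (1 / (1 - p) - 1) * (1 - \<epsilon>) ^ k) > 1 - \<epsilon>"
  shows "((\<lambda>n. (rb_EX n \<alpha> r k p)^2 / rb_EX2 n \<alpha> r k p) \<longlongrightarrow> 0) sequentially"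
proof -
  define \<tau> where "\<tau> = 1 / (1 - p)"
  have \<tau>1: "\<tau> > 1" unfolding \<tau>_def using p0 p1 by (simp add: field_simps)
  define \<Phi>i where "\<Phi>i = 1 + (\<tau> - 1) * (1 - \<epsilon>) ^ k"
  have \<Phi>ipos: "\<Phi>i > 0" unfolding \<Phi>i_def using \<tau>1 e1 by (simp add: add_pos_nonneg)
  define dr where "dr n = real (rb_d n \<alpha>)" for n
  define Dr where "Dr n = dr n ^ k" for n
  define qn where "qn n = rb_q n \<alpha> k p" for n
  define tn where "tn n = rb_t n \<alpha> r" for n
  define jn where "jn n = nat \<lfloor>\<epsilon> * real n\<rfloor>" for n
  define mn where "mn n = n - jn n" for n
  define u where "u n = real (qn n) / Dr n" for n
  define e where "e n = inverse (Dr n)" for n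
  define aL where "aL n = ((real (mn n) - real k + 1) / real n) ^ k" for n
  define \<Phi> where "\<Phi> n = aL n / (1 - u n) + (1 - aL n) * ((1 - u n - e n) / ((1 - u n) * (1 - e n)))" for n
  define N where "N n = real n * ln (dr n)" for n
  define B where "B n = real (mn n) / real n - (real (tn n) / N n) * ln (\<Phi> n)" for n

  have Ld: "filterlim dr at_top sequentially" unfolding dr_def by (rule d_lim[OF \<alpha>])
  have LD: "filterlim Dr at_top sequentially" unfolding Dr_def
    by (rule filterlim_pow_at_top) (use k Ld in auto)
  have Le: "(e \<longlongrightarrow> 0) sequentially" unfolding e_def by (rule tendsto_inverse_0_at_top[OF LD])
  have evD: "\<forall>\<^sub>F n in sequentially. c \<le> Dr n" for c
    using LD unfolding filterlim_at_top by blast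
  have evd: "\<forall>\<^sub>F n in sequentially. c \<le> dr n" for c
    using Ld unfolding filterlim_at_top by blast
  have qfl: "real (qn n) = real_of_int \<lfloor>p * Dr n\<rfloor>" for n
  proof -
    have "p * Dr n \<ge> 0" unfolding Dr_def dr_def using p0 by simp
    thus ?thesis unfolding qn_def rb_q_def Dr_def dr_def by simp
  qed
  have Lu: "(u \<longlongrightarrow> p) sequentially"
  proof (rule tendsto_sandwich[of "\<lambda>n. p - e n" _ _ "\<lambda>n. p"])
    show "\<forall>\<^sub>F n in sequentially. p - e n \<le> u n"
      using evD[of 1]
    proof eventually_elim
      case (elim n)
      have "real (qn n) \<ge> p * Dr n - 1" unfolding qfl by linarith
      hence "real (qn n) / Dr n \<ge> (p * Dr n - 1) / Dr n" using elim by (intro divide_right_mono) auto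
      thus ?case unfolding u_def e_def using elim by (simp add: field_simps)
    qed
    show "\<forall>\<^sub>F n in sequentially. u n \<le> p"
      using evD[of 1]
    proof eventually_elim
      case (elim n)
      have "real (qn n) \<le> p * Dr n" unfolding qfl by linarith
      thus ?case unfolding u_def using elim by (simp add: field_simps)
    qed
    show "((\<lambda>n. p - e n) \<longlongrightarrow> p) sequentially" using tendsto_diff[OF tendsto_const Le, of p] by simp
  qed simp
  have jn_le: "real (jn n) \<le> \<epsilon> * real n" "real (jn n) > \<epsilon> * real n - 1" for n
  proof -
    have "\<epsilon> * real n \<ge> 0" using e0 by simp
    thus "real (jn n) \<le> \<epsilon> * real n" "real (jn n) > \<epsilon> * real n - 1" unfolding jn_def by linarith+
  qed
  have jn_n: "jn n \<le> n" for n
  proof -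
    have "real (jn n) \<le> real n" using jn_le(1)[of n] e1 by (smt (verit) mult_left_le_one_le of_nat_0_le_iff e0)
    thus ?thesis by simp
  qed
  have mr: "real (mn n) = real n - real (jn n)" for n unfolding mn_def using jn_n[of n] by (simp add: of_nat_diff)
  have Lm: "((\<lambda>n. real (mn n) / real n) \<longlongrightarrow> 1 - \<epsilon>) sequentially"
  proof (rule tendsto_sandwich[of "\<lambda>n. 1 - \<epsilon>" _ _ "\<lambda>n. 1 - \<epsilon> + 1 / real n"])
    show "\<forall>\<^sub>F n in sequentially. 1 - \<epsilon> \<le> real (mn n) / real n"
      using eventually_gt_at_top[of "0::nat"]
    proof eventually_elim
      case (elim n)
      thus ?case unfolding mr using jn_le(1)[of n] by (simp add: field_simps)
    qed
    show "\<forall>\<^sub>F n in sequentially. real (mn n) / real n \<le> 1 - \<epsilon> + 1 / real n"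
      using eventually_gt_at_top[of "0::nat"]
    proof eventually_elim
      case (elim n)
      have "(\<epsilon> * real n) * real n \<le> (1 + real (jn n)) * real n"
        using jn_le(2)[of n] by (intro mult_right_mono) auto
      thus ?case unfolding mr using elim by (simp add: field_simps)
    qed
    show "((\<lambda>n. 1 - \<epsilon> + 1 / real n) \<longlongrightarrow> 1 - \<epsilon>) sequentially"
      using tendsto_add[OF tendsto_const lim_const_over_n[of 1], of "1 - \<epsilon>"] by simp
  qed simp
  have LaL: "(aL \<longlongrightarrow> (1 - \<epsilon>) ^ k) sequentially"
  proof -
    have "((\<lambda>n. (real (mn n) / real n + (1 - real k) / real n) ^ k) \<longlongrightarrow> (1 - \<epsilon> + 0) ^ k) sequentially"
      by (intro tendsto_power tendsto_add Lm lim_const_over_n)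
    moreover have "\<forall>\<^sub>F n in sequentially. (real (mn n) / real n + (1 - real k) / real n) ^ k = aL n"
      using eventually_gt_at_top[of "0::nat"]
      by eventually_elim (simp add: aL_def add_divide_distrib[symmetric] algebra_simps)
    ultimately show ?thesis using Lim_transform_eventually by fastforce
  qed
  have L\<Phi>: "(\<Phi> \<longlongrightarrow> \<Phi>i) sequentially"
  proof -
    have "(\<Phi> \<longlongrightarrow> (1 - \<epsilon>) ^ k / (1 - p) + (1 - (1 - \<epsilon>) ^ k) * ((1 - p - 0) / ((1 - p) * (1 - 0)))) sequentially"
      unfolding \<Phi>_def using p1 by (intro tendsto_intros LaL Lu Le) auto
    moreover have "(1 - \<epsilon>) ^ k / (1 - p) + (1 - (1 - \<epsilon>) ^ k) * ((1 - p - 0) / ((1 - p) * (1 - 0))) = \<Phi>i"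
      unfolding \<Phi>i_def \<tau>_def using p1 by (simp add: field_simps)
    ultimately show ?thesis by simp
  qed
  have LN: "filterlim N at_top sequentially" unfolding N_def
    by (rule filterlim_at_top_mult_at_top[OF filterlim_real_sequentially filterlim_compose[OF ln_at_top Ld]])
  have evN: "\<forall>\<^sub>F n in sequentially. c \<le> N n" for c
    using LN unfolding filterlim_at_top by blast
  have tfl: "real (tn n) = real_of_int \<lfloor>r * N n\<rfloor>" if "N n \<ge> 0" for n
  proof -
    have "r * N n \<ge> 0" using r0 that by simp
    thus ?thesis unfolding tn_def rb_t_def N_def dr_def by (simp add: mult.assoc)
  qed
  have Lt: "((\<lambda>n. real (tn n) / N n) \<longlongrightarrow> r) sequentially"
  proof (rule tendsto_sandwich[of "\<lambda>n. r - inverse (N n)" _ _ "\<lambda>n. r"])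
    show "\<forall>\<^sub>F n in sequentially. r - inverse (N n) \<le> real (tn n) / N n"
      using evN[of 1]
    proof eventually_elim
      case (elim n)
      have "real (tn n) \<ge> r * N n - 1" using tfl[of n] elim by linarith
      hence "real (tn n) / N n \<ge> (r * N n - 1) / N n" using elim by (intro divide_right_mono) auto
      thus ?case using elim by (simp add: field_simps)
    qed
    show "\<forall>\<^sub>F n in sequentially. real (tn n) / N n \<le> r"
      using evN[of 1]
    proof eventually_elim
      case (elim n)
      have "real (tn n) \<le> r * N n" using tfl[of n] elim by linarith
      thus ?case using elim by (simp add: field_simps)
    qed
    show "((\<lambda>n. r - inverse (N n)) \<longlongrightarrow> r) sequentially"
      using tendsto_diff[OF tendsto_const tendsto_inverse_0_at_top[OF LN], of r] by simp
  qed simp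
  have LB: "(B \<longlongrightarrow> (1 - \<epsilon>) - r * ln \<Phi>i) sequentially"
    unfolding B_def by (intro tendsto_intros Lm Lt L\<Phi>) (use \<Phi>ipos in auto)
  have neg: "(1 - \<epsilon>) - r * ln \<Phi>i < 0" using rL unfolding \<Phi>i_def \<tau>_def by simp
  have LE: "filterlim (\<lambda>n. B n * N n) at_bot sequentially"
    by (rule filterlim_tendsto_neg_mult_at_bot[OF LB neg LN])
  have Lexp: "((\<lambda>n. exp (B n * N n)) \<longlongrightarrow> 0) sequentially"
    by (rule filterlim_compose[OF exp_at_bot LE])
  show ?thesis
  proof (rule tendsto_sandwich[of "\<lambda>n. 0" _ _ "\<lambda>n. exp (B n * N n)"])
    show "\<forall>\<^sub>F n in sequentially. 0 \<le> (rb_EX n \<alpha> r k p)\<^sup>2 / rb_EX2 n \<alpha> r k p"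
      by (rule always_eventually) (auto simp: rb_EX2_def intro!: divide_nonneg_nonneg Bochner_Integration.integral_nonneg)
    have ev\<Phi>: "\<forall>\<^sub>F n in sequentially. \<Phi> n > 0"
      using order_tendstoD(1)[OF L\<Phi> \<Phi>ipos] .
    have evk: "\<forall>\<^sub>F n in sequentially. real k / (1 - \<epsilon>) \<le> real n"
      using filterlim_real_sequentially unfolding filterlim_at_top by blast
    show "\<forall>\<^sub>F n in sequentially. (rb_EX n \<alpha> r k p)\<^sup>2 / rb_EX2 n \<alpha> r k p \<le> exp (B n * N n)"
      using eventually_gt_at_top[of "0::nat"] evd[of 2] evD[of "2 / (1 - p)"] evk ev\<Phi>
    proof eventually_elim
      case (elim n)
      have n0: "0 < n" and d2: "real (rb_d n \<alpha>) \<ge> 2" using elim unfolding dr_def by auto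
      have DD: "real (rb_d n \<alpha> ^ k) = Dr n" unfolding Dr_def dr_def by simp
      have qD: "qn n + 2 \<le> rb_d n \<alpha> ^ k"
      proof -
        have "real (qn n) \<le> p * Dr n" unfolding qfl by linarith
        moreover have "(1 - p) * Dr n \<ge> 2" using elim(3) p1 by (simp add: field_simps)
        ultimately have "real (qn n) + 2 \<le> real (rb_d n \<alpha> ^ k)" unfolding DD by (simp add: algebra_simps)
        thus ?thesis by linarith
      qed
      have km: "k \<le> mn n"
      proof -
        have "real k \<le> (1 - \<epsilon>) * real n" using elim(4) e1 by (simp add: field_simps)
        also have "\<dots> \<le> real (mn n)" unfolding mr using jn_le(1)[of n] by (simp add: algebra_simps)
        finally show ?thesis by simp
      qed
      have mn: "mn n \<le> n" unfolding mn_def by simp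
      have "(rb_EX n \<alpha> r k p)\<^sup>2 / rb_EX2 n \<alpha> r k p \<le> exp (real (mn n) * ln (real (rb_d n \<alpha>)) - real (tn n) * ln (\<Phi> n))"
        unfolding rb_EX_Inst rb_EX2_Inst tn_def[symmetric] qn_def[symmetric]
        by (rule per_n[OF d2 refl qD km mn n0 _ _ refl _ elim(5)])
           (simp_all add: u_def e_def Dr_def dr_def aL_def \<Phi>_def)
      also have "real (mn n) * ln (real (rb_d n \<alpha>)) - real (tn n) * ln (\<Phi> n) = B n * N n"
      proof -
        have lp: "ln (real (rb_d n \<alpha>)) > 0" using d2 by simp
        thus ?thesis unfolding B_def N_def dr_def using n0 by (simp add: field_simps)
      qed
      finally show ?case .
    qed
  qed (simp_all add: Lexp)
qed


theorem claim5p3: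
  fixes k :: nat and \<alpha> p :: real
  assumes "k \<ge> 2" and "\<alpha> > 0" and "0 < p" and "p < 1"
    and "k < (1 / (1 - p)) * ln (1 / (1 - p)) / (1 / (1 - p) - 1)"
  shows "\<exists>r0. 0 \<le> r0 \<and> r0 < 1 / ln (1 / (1 - p)) \<and>
           (\<forall>r. r0 < r \<and> r < 1 / ln (1 / (1 - p)) \<longrightarrow>
              ((\<lambda>n. (rb_EX n \<alpha> r k p)^2 / rb_EX2 n \<alpha> r k p) \<longlongrightarrow> 0) sequentially)"
proof -
  define \<tau> where "\<tau> = 1 / (1 - p)"
  have \<tau>1: "\<tau> > 1" unfolding \<tau>_def using assms(3,4) by (simp add: field_simps)
  have l\<tau>: "ln \<tau> > 0" using \<tau>1 by simp
  have hk: "real k * (\<tau> - 1) < \<tau> * ln \<tau>"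
    using assms(5) \<tau>1 unfolding \<tau>_def[symmetric] by (simp add: pos_less_divide_eq)
  obtain \<epsilon> where \<epsilon>: "0 < \<epsilon>" "\<epsilon> < 1" "(1 - \<epsilon>) * ln \<tau> < ln (1 + (\<tau> - 1) * (1 - \<epsilon>) ^ k)"
    using eps_exists[OF assms(1) \<tau>1 hk] by blast
  define L where "L = ln (1 + (\<tau> - 1) * (1 - \<epsilon>) ^ k)"
  have L0: "L > 0" unfolding L_def using \<epsilon>(3) \<epsilon>(2) l\<tau>
    by (smt (verit) mult_pos_pos)
  define r0 where "r0 = (1 - \<epsilon>) / L"
  show ?thesis
  proof (intro exI[of _ r0] conjI allI impI)
    show "0 \<le> r0" unfolding r0_def using L0 \<epsilon> by simp
    show "r0 < 1 / ln (1 / (1 - p))"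
      unfolding r0_def \<tau>_def[symmetric] using L0 l\<tau> \<epsilon>(3) unfolding L_def[symmetric]
      by (simp add: divide_less_eq field_simps)
    fix r assume r: "r0 < r \<and> r < 1 / ln (1 / (1 - p))"
    have rpos: "r > 0" using r \<open>0 \<le> r0\<close> by linarith
    have "1 - \<epsilon> < r * L" using r L0 unfolding r0_def by (simp add: divide_less_eq mult.commute)
    hence rL: "r * ln (1 + (1 / (1 - p) - 1) * (1 - \<epsilon>) ^ k) > 1 - \<epsilon>"
      unfolding L_def \<tau>_def .
    show "((\<lambda>n. (rb_EX n \<alpha> r k p)^2 / rb_EX2 n \<alpha> r k p) \<longlongrightarrow> 0) sequentially"
      by (rule main_lim[OF _ assms(2,3,4) \<epsilon>(1,2) rpos rL]) (use assms(1) in simp)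
  qed
qed

end
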